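(* Let $\mu_1,\dots,\mu_k$ be probability measures on $\mathbb{R}$ such that, for each $j$, $\lim_{t\to0}H((\mu_j)_t)/|\log t|$ exists. Let $\alpha_j\ge0$ with $\sum_j\alpha_j=1$. Then $$\delta_c\Big(\sum_j\alpha_j\mu_j\Big)=\sum_j\alpha_j\delta_c(\mu_j).$$
   Context: For $t>0$, $\nu_t$ is the centered Gaussian law on $\mathbb{R}$ with variance $t^2$, $\rho_t=\rho*\nu_t$ for a probability measure $\rho$, and $H(p\,dx)=\int p\log p\,dx$. Define $$\delta_c(\rho)=1-\liminf_{t\to0}\frac{H(\rho_t)}{|\log t|}.$$ *)

theory Defs
  imports "HOL-Probability.Probability"
begin

text \<open>Density of rho_t = rho * nu_t, nu_t = centered Gaussian with variance t^2.\<close>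
definition smoothed_density :: "real measure \<Rightarrow> real \<Rightarrow> real \<Rightarrow> real" where
  "smoothed_density \<rho> t x = (\<integral>y. normal_density 0 t (x - y) \<partial>\<rho>)"

definition entropyH :: "(real \<Rightarrow> real) \<Rightarrow> ereal" where
  "entropyH p =
     enn2ereal (\<integral>\<^sup>+ x. ennreal (max 0 (p x * ln (p x))) \<partial>lborel)
   - enn2ereal (\<integral>\<^sup>+ x. ennreal (max 0 (- (p x * ln (p x)))) \<partial>lborel)"

definition entropy_ratio :: "real measure \<Rightarrow> real \<Rightarrow> ereal" where
  "entropy_ratio \<rho> t = entropyH (smoothed_density \<rho> t) * ereal (1 / \<bar>ln t\<bar>)"

definition delta_c :: "real measure \<Rightarrow> ereal" where
  "delta_c \<rho> = 1 - Liminf (at_right 0) (entropy_ratio \<rho>)"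

definition mixture :: "nat \<Rightarrow> (nat \<Rightarrow> real) \<Rightarrow> (nat \<Rightarrow> real measure) \<Rightarrow> real measure" where
  "mixture k \<alpha> \<mu> = measure_of UNIV (sets borel)
      (\<lambda>A. \<Sum>j<k. ennreal (\<alpha> j) * emeasure (\<mu> j) A)"

end

theory Submission
  imports Defs
begin

lemma ln_ge_1m: "x > 0 \<Longrightarrow> ln x \<ge> 1 - 1 / (x::real)"
proof -
  assume x: "x > 0"
  have "ln (1/x) \<le> 1/x - 1" using ln_le_minus_one[of "1/x"] x by simp
  thus ?thesis using x by (simp add: ln_div)
qed

lemma pw_upper_term:
  fixes a q P :: real
  assumes "0 \<le> a" "0 \<le> q" "0 < P"
  shows "a * (q * ln q) - a * q * ln P \<ge> a * (q - P)"
proof (cases "q = 0")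
  case True then show ?thesis using assms by simp
next
  case False
  then have q: "q > 0" using assms by simp
  have "ln (q / P) \<ge> 1 - P / q"
    using ln_ge_1m[of "q/P"] q assms by (simp add: field_simps)
  hence "q * ln (q/P) \<ge> q * (1 - P/q)" using q by (intro mult_left_mono) auto
  also have "q * ln (q/P) = q * ln q - q * ln P" using q assms by (simp add: ln_div algebra_simps)
  also have "q * (1 - P/q) = q - P" using q by (simp add: field_simps)
  finally have "q * ln q - q * ln P \<ge> q - P" .
  hence "a * (q * ln q - q * ln P) \<ge> a * (q - P)" using assms(1) mult_left_mono by blast
  thus ?thesis by (simp add: algebra_simps)
qed

lemma pw_lower_term:
  fixes a q P :: real
  assumes "0 \<le> a" "0 \<le> q" "a * q \<le> P"
  shows "a * q * ln P \<ge> a * (q * ln q) - q"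
proof (cases "a = 0 \<or> q = 0")
  case True then show ?thesis using assms by auto
next
  case False
  then have a: "a > 0" and q: "q > 0" using assms by auto
  have "ln P \<ge> ln (a*q)" using a q assms by (subst ln_le_cancel_iff) (auto intro: less_le_trans[of 0 "a*q"])
  hence "ln P \<ge> ln a + ln q" using a q by (simp add: ln_mult)
  moreover have "ln a \<ge> 1 - 1/a" using ln_ge_1m[of a] a by simp
  ultimately have "a*q*ln P \<ge> a*q*(1 - 1/a + ln q)" using a q
    by (intro mult_left_mono) auto
  also have "a*q*(1 - 1/a + ln q) = a*q - q + a*(q*ln q)" using a by (simp add: field_simps)
  finally show ?thesis using mult_pos_pos[OF a q] by linarith
qed
lemma pw_upper:
  fixes A :: "nat set" and a q :: "nat \<Rightarrow> real"
  assumes fin: "finite A" and a: "\<And>j. j \<in> A \<Longrightarrow> a j \<ge> 0" and q: "\<And>j. j \<in> A \<Longrightarrow> q j \<ge> 0"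
    and s: "(\<Sum>j\<in>A. a j) = 1"
  shows "(\<Sum>j\<in>A. a j * q j) * ln (\<Sum>j\<in>A. a j * q j) \<le> (\<Sum>j\<in>A. a j * (q j * ln (q j)))"
proof -
  define P where "P = (\<Sum>j\<in>A. a j * q j)"
  have P0: "P \<ge> 0" unfolding P_def using a q by (intro sum_nonneg) auto
  show ?thesis
  proof (cases "P = 0")
    case True
    have "\<And>j. j \<in> A \<Longrightarrow> a j * q j = 0"
      using True unfolding P_def using fin a q by (subst (asm) sum_nonneg_eq_0_iff) auto
    hence "\<And>j. j \<in> A \<Longrightarrow> a j * (q j * ln (q j)) = 0" by (metis mult.assoc mult_zero_left)
    hence "(\<Sum>j\<in>A. a j * (q j * ln (q j))) = 0" by (intro sum.neutral) auto
    thus ?thesis using True P_def by simp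
  next
    case False
    hence P: "P > 0" using P0 by simp
    have "(\<Sum>j\<in>A. a j * (q j - P)) \<le> (\<Sum>j\<in>A. a j * (q j * ln (q j)) - a j * q j * ln P)"
      using pw_upper_term a q P by (intro sum_mono) auto
    also have "(\<Sum>j\<in>A. a j * (q j - P)) = P - P" using s unfolding P_def
      by (simp add: right_diff_distrib sum_subtractf sum_distrib_right[symmetric])
    also have "(\<Sum>j\<in>A. a j * (q j * ln (q j)) - a j * q j * ln P) = (\<Sum>j\<in>A. a j * (q j * ln (q j))) - P * ln P"
      unfolding P_def by (simp add: sum_subtractf sum_distrib_right)
    finally show ?thesis unfolding P_def by simp
  qed
qed

lemma pw_lower:
  fixes A :: "nat set" and a q :: "nat \<Rightarrow> real"
  assumes fin: "finite A" and a: "\<And>j. j \<in> A \<Longrightarrow> a j \<ge> 0" and q: "\<And>j. j \<in> A \<Longrightarrow> q j \<ge> 0"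
  shows "(\<Sum>j\<in>A. a j * (q j * ln (q j))) - (\<Sum>j\<in>A. q j) \<le> (\<Sum>j\<in>A. a j * q j) * ln (\<Sum>j\<in>A. a j * q j)"
proof -
  define P where "P = (\<Sum>j\<in>A. a j * q j)"
  have le: "a j * q j \<le> P" if "j \<in> A" for j
    unfolding P_def using a q fin that by (intro member_le_sum) auto
  have "(\<Sum>j\<in>A. a j * (q j * ln (q j)) - q j) \<le> (\<Sum>j\<in>A. a j * q j * ln P)"
    using pw_lower_term a q le by (intro sum_mono) auto
  thus ?thesis unfolding P_def by (simp add: sum_subtractf sum_distrib_right)
qed
lemma entropyH_eq:
  assumes f[measurable]: "f \<in> borel_measurable lborel"
    and int: "integrable lborel (\<lambda>x. f x * ln (f x))"
  shows "entropyH f = ereal (\<integral>x. f x * ln (f x) \<partial>lborel)"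
proof -
  define g where "g x = f x * ln (f x)" for x
  have gi: "integrable lborel g" using int unfolding g_def by simp
  have i1: "integrable lborel (\<lambda>x. max 0 (g x))" using gi by (intro integrable_max) auto
  have i2: "integrable lborel (\<lambda>x. max 0 (- g x))" using gi by (intro integrable_max) auto
  have e1: "(\<integral>\<^sup>+ x. ennreal (max 0 (g x)) \<partial>lborel) = ennreal (\<integral>x. max 0 (g x) \<partial>lborel)"
    using i1 by (intro nn_integral_eq_integral) auto
  have e2: "(\<integral>\<^sup>+ x. ennreal (max 0 (- g x)) \<partial>lborel) = ennreal (\<integral>x. max 0 (- g x) \<partial>lborel)"
    using i2 by (intro nn_integral_eq_integral) auto
  have "(\<integral>x. g x \<partial>lborel) = (\<integral>x. max 0 (g x) - max 0 (- g x) \<partial>lborel)"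
    by (intro Bochner_Integration.integral_cong) auto
  also have "\<dots> = (\<integral>x. max 0 (g x) \<partial>lborel) - (\<integral>x. max 0 (- g x) \<partial>lborel)"
    using i1 i2 by (rule Bochner_Integration.integral_diff)
  finally have d: "(\<integral>x. g x \<partial>lborel) = (\<integral>x. max 0 (g x) \<partial>lborel) - (\<integral>x. max 0 (- g x) \<partial>lborel)" .
  have n1: "(\<integral>x. max 0 (g x) \<partial>lborel) \<ge> 0" by (intro integral_nonneg_AE) auto
  have n2: "(\<integral>x. max 0 (- g x) \<partial>lborel) \<ge> 0" by (intro integral_nonneg_AE) auto
  show ?thesis
    unfolding entropyH_def g_def[symmetric] e1 e2 d using n1 n2 by simp
qed

lemma entropyH_fin:
  assumes f[measurable]: "f \<in> borel_measurable lborel"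
    and fin: "\<bar>entropyH f\<bar> \<noteq> \<infinity>"
  shows "integrable lborel (\<lambda>x. f x * ln (f x))"
proof -
  define g where "g x = f x * ln (f x)" for x
  have gm[measurable]: "g \<in> borel_measurable lborel" unfolding g_def by measurable
  define P where "P = (\<integral>\<^sup>+ x. ennreal (max 0 (g x)) \<partial>lborel)"
  define N where "N = (\<integral>\<^sup>+ x. ennreal (max 0 (- g x)) \<partial>lborel)"
  have H: "entropyH f = enn2ereal P - enn2ereal N" unfolding entropyH_def P_def N_def g_def by simp
  have Pf: "P \<noteq> \<infinity>"
  proof
    assume "P = \<infinity>"
    then have "enn2ereal P = \<infinity>" by simp
    then have "entropyH f = \<infinity>" unfolding H using enn2ereal_nonneg[of N] by (cases "enn2ereal N") simp_all
    then show False using fin by simp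
  qed
  have Nf: "N \<noteq> \<infinity>"
  proof
    assume "N = \<infinity>"
    then have "enn2ereal N = \<infinity>" by simp
    moreover have "enn2ereal P \<noteq> \<infinity>" using Pf by simp
    moreover have "enn2ereal P \<noteq> -\<infinity>" using enn2ereal_nonneg[of P] by auto
    ultimately have "entropyH f = -\<infinity>" unfolding H by (cases "enn2ereal P") simp_all
    then show False using fin by simp
  qed
  have "(\<integral>\<^sup>+ x. ennreal (norm (g x)) \<partial>lborel) = (\<integral>\<^sup>+ x. ennreal (max 0 (g x)) + ennreal (max 0 (- g x)) \<partial>lborel)"
    proof (intro nn_integral_cong)
    fix x show "ennreal (norm (g x)) = ennreal (max 0 (g x)) + ennreal (max 0 (- g x))"
      by (cases "g x \<ge> 0") (simp_all add: max_def)
  qed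
  also have "\<dots> = P + N" unfolding P_def N_def by (intro nn_integral_add) auto
  finally have "(\<integral>\<^sup>+ x. ennreal (norm (g x)) \<partial>lborel) < \<infinity>" using Pf Nf by (simp add: less_top)
  then have "integrable lborel g" by (intro integrableI_bounded) auto
  then show ?thesis unfolding g_def by simp
qed
lemma mixture_sets: "sets (mixture k \<alpha> \<mu>) = sets borel"
  unfolding mixture_def using sets.sigma_sets_eq[of borel] by (subst sets_measure_of) auto

lemma mixture_space: "space (mixture k \<alpha> \<mu>) = UNIV"
  unfolding mixture_def by (subst space_measure_of) auto

lemma mixture_emeasure:
  assumes sets: "\<And>j. j < k \<Longrightarrow> sets (\<mu> j) = sets borel"
    and A: "A \<in> sets borel"
  shows "emeasure (mixture k \<alpha> \<mu>) A = (\<Sum>j<k. ennreal (\<alpha> j) * emeasure (\<mu> j) A)"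
  unfolding mixture_def
proof (rule emeasure_measure_of_sigma)
  show "sigma_algebra UNIV (sets borel)"
    using sets.sigma_algebra_axioms[of borel] by simp
  show "positive (sets borel) (\<lambda>A. \<Sum>j<k. ennreal (\<alpha> j) * emeasure (\<mu> j) A)"
    unfolding positive_def by simp
  show "countably_additive (sets borel) (\<lambda>A. \<Sum>j<k. ennreal (\<alpha> j) * emeasure (\<mu> j) A)"
    unfolding countably_additive_def
  proof (intro allI impI)
    fix B :: "nat \<Rightarrow> real set"
    assume B: "range B \<subseteq> sets borel" "disjoint_family B"
    have "(\<Sum>i. \<Sum>j<k. ennreal (\<alpha> j) * emeasure (\<mu> j) (B i))
        = (\<Sum>j<k. \<Sum>i. ennreal (\<alpha> j) * emeasure (\<mu> j) (B i))"
      by (rule suminf_sum) (rule summableI)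
    also have "\<dots> = (\<Sum>j<k. ennreal (\<alpha> j) * emeasure (\<mu> j) (\<Union> (range B)))"
    proof (intro sum.cong refl)
      fix j assume "j \<in> {..<k}"
      then have "sets (\<mu> j) = sets borel" using sets by simp
      then have "(\<Sum>i. emeasure (\<mu> j) (B i)) = emeasure (\<mu> j) (\<Union> (range B))"
        using B by (intro suminf_emeasure) auto
      then show "(\<Sum>i. ennreal (\<alpha> j) * emeasure (\<mu> j) (B i)) = ennreal (\<alpha> j) * emeasure (\<mu> j) (\<Union> (range B))"
        by (simp add: ennreal_suminf_cmult)
    qed
    finally show "(\<Sum>i. \<Sum>j<k. ennreal (\<alpha> j) * emeasure (\<mu> j) (B i))
        = (\<Sum>j<k. ennreal (\<alpha> j) * emeasure (\<mu> j) (\<Union> (range B)))" .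
  qed
qed (rule A)

lemma meas_transfer:
  assumes "sets M = sets borel" "f \<in> measurable borel N"
  shows "f \<in> measurable M N"
  using measurable_cong_sets[of M borel N N] assms by simp

lemma mixture_nn_integral:
  assumes sets: "\<And>j. j < k \<Longrightarrow> sets (\<mu> j) = sets borel"
    and f: "f \<in> borel_measurable borel"
  shows "(\<integral>\<^sup>+ x. f x \<partial>mixture k \<alpha> \<mu>) = (\<Sum>j<k. ennreal (\<alpha> j) * (\<integral>\<^sup>+ x. f x \<partial>\<mu> j))"
  using f
proof induct
  case (cong f g)
  have "(\<integral>\<^sup>+ x. f x \<partial>mixture k \<alpha> \<mu>) = (\<integral>\<^sup>+ x. g x \<partial>mixture k \<alpha> \<mu>)"
    using cong by (intro nn_integral_cong) simp
  moreover have "(\<integral>\<^sup>+ x. f x \<partial>\<mu> j) = (\<integral>\<^sup>+ x. g x \<partial>\<mu> j)" for j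
    using cong by (intro nn_integral_cong) simp
  ultimately show ?case using cong by simp
next
  case (set A)
  have "(\<integral>\<^sup>+ x. indicator A x \<partial>mixture k \<alpha> \<mu>) = emeasure (mixture k \<alpha> \<mu>) A"
    using set by (intro nn_integral_indicator) (simp add: mixture_sets)
  also have "\<dots> = (\<Sum>j<k. ennreal (\<alpha> j) * emeasure (\<mu> j) A)"
    using set sets by (intro mixture_emeasure) auto
  also have "\<dots> = (\<Sum>j<k. ennreal (\<alpha> j) * (\<integral>\<^sup>+ x. indicator A x \<partial>\<mu> j))"
    using set sets by (intro sum.cong refl) (simp add: nn_integral_indicator)
  finally show ?case .
next
  case (mult u c)
  have um: "u \<in> borel_measurable (mixture k \<alpha> \<mu>)"
    using mult by (intro meas_transfer[OF mixture_sets])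
  have "(\<integral>\<^sup>+ x. c * u x \<partial>mixture k \<alpha> \<mu>) = c * (\<integral>\<^sup>+ x. u x \<partial>mixture k \<alpha> \<mu>)"
    using um by (rule nn_integral_cmult)
  also have "\<dots> = c * (\<Sum>j<k. ennreal (\<alpha> j) * (\<integral>\<^sup>+ x. u x \<partial>\<mu> j))"
    by (rule arg_cong[where f="\<lambda>z. c * z"]) (rule mult.hyps(4))
  also have "\<dots> = (\<Sum>j<k. ennreal (\<alpha> j) * (c * (\<integral>\<^sup>+ x. u x \<partial>\<mu> j)))"
    unfolding sum_distrib_left by (intro sum.cong refl) (simp only: ac_simps)
  also have "\<dots> = (\<Sum>j<k. ennreal (\<alpha> j) * (\<integral>\<^sup>+ x. c * u x \<partial>\<mu> j))"
  proof (intro sum.cong refl)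
    fix j assume "j \<in> {..<k}"
    then have "u \<in> borel_measurable (\<mu> j)" using mult sets by (intro meas_transfer[OF sets]) auto
    then show "ennreal (\<alpha> j) * (c * (\<integral>\<^sup>+ x. u x \<partial>\<mu> j)) = ennreal (\<alpha> j) * (\<integral>\<^sup>+ x. c * u x \<partial>\<mu> j)"
      by (simp add: nn_integral_cmult)
  qed
  finally show ?case .
next
  case (add u v)
  have um: "u \<in> borel_measurable (mixture k \<alpha> \<mu>)" "v \<in> borel_measurable (mixture k \<alpha> \<mu>)"
    using add by (intro meas_transfer[OF mixture_sets]; simp)+
  have "(\<integral>\<^sup>+ x. v x + u x \<partial>mixture k \<alpha> \<mu>) = (\<integral>\<^sup>+ x. v x \<partial>mixture k \<alpha> \<mu>) + (\<integral>\<^sup>+ x. u x \<partial>mixture k \<alpha> \<mu>)"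
    using um by (intro nn_integral_add) auto
  also have "\<dots> = (\<Sum>j<k. ennreal (\<alpha> j) * (\<integral>\<^sup>+ x. v x \<partial>\<mu> j)) + (\<Sum>j<k. ennreal (\<alpha> j) * (\<integral>\<^sup>+ x. u x \<partial>\<mu> j))"
    by (simp only: add.hyps(3) add.hyps(7))
  also have "\<dots> = (\<Sum>j<k. ennreal (\<alpha> j) * ((\<integral>\<^sup>+ x. v x \<partial>\<mu> j) + (\<integral>\<^sup>+ x. u x \<partial>\<mu> j)))"
    by (simp only: sum.distrib[symmetric] distrib_left)
  also have "\<dots> = (\<Sum>j<k. ennreal (\<alpha> j) * (\<integral>\<^sup>+ x. v x + u x \<partial>\<mu> j))"
  proof (intro sum.cong refl)
    fix j assume "j \<in> {..<k}"
    then have "u \<in> borel_measurable (\<mu> j)" "v \<in> borel_measurable (\<mu> j)"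
      using add sets by (intro meas_transfer[OF sets]; simp)+
    then show "ennreal (\<alpha> j) * ((\<integral>\<^sup>+ x. v x \<partial>\<mu> j) + (\<integral>\<^sup>+ x. u x \<partial>\<mu> j)) = ennreal (\<alpha> j) * (\<integral>\<^sup>+ x. v x + u x \<partial>\<mu> j)"
      by (simp add: nn_integral_add)
  qed
  finally show ?case .
next
  case (seq U)
  have um: "\<And>i. U i \<in> borel_measurable (mixture k \<alpha> \<mu>)"
    using seq by (intro meas_transfer[OF mixture_sets]) auto
  have umj: "\<And>i j. j < k \<Longrightarrow> U i \<in> borel_measurable (\<mu> j)"
    using seq sets by (intro meas_transfer[OF sets]) auto
  have "(\<integral>\<^sup>+ x. (SUP i. U i) x \<partial>mixture k \<alpha> \<mu>) = (SUP i. (\<integral>\<^sup>+ x. U i x \<partial>mixture k \<alpha> \<mu>))"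
    unfolding SUP_apply using um seq by (intro nn_integral_monotone_convergence_SUP) auto
  also have "\<dots> = (SUP i. (\<Sum>j<k. ennreal (\<alpha> j) * (\<integral>\<^sup>+ x. U i x \<partial>\<mu> j)))"
    using seq by simp
  also have "\<dots> = (\<Sum>j<k. SUP i. ennreal (\<alpha> j) * (\<integral>\<^sup>+ x. U i x \<partial>\<mu> j))"
  proof (rule ennreal_SUP_sum)
    fix j assume "j \<in> {..<k}"
    show "incseq (\<lambda>i. ennreal (\<alpha> j) * (\<integral>\<^sup>+ x. U i x \<partial>\<mu> j))"
      using seq(4) unfolding incseq_def
      by (auto intro!: mult_left_mono nn_integral_mono simp: le_fun_def)
  qed
  also have "\<dots> = (\<Sum>j<k. ennreal (\<alpha> j) * (\<integral>\<^sup>+ x. (SUP i. U i) x \<partial>\<mu> j))"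
  proof (intro sum.cong refl)
    fix j assume j: "j \<in> {..<k}"
    have "(\<integral>\<^sup>+ x. (SUP i. U i) x \<partial>\<mu> j) = (SUP i. (\<integral>\<^sup>+ x. U i x \<partial>\<mu> j))"
      unfolding SUP_apply using umj j seq by (intro nn_integral_monotone_convergence_SUP) auto
    then show "(SUP i. ennreal (\<alpha> j) * (\<integral>\<^sup>+ x. U i x \<partial>\<mu> j)) = ennreal (\<alpha> j) * (\<integral>\<^sup>+ x. (SUP i. U i) x \<partial>\<mu> j)"
      by (simp add: SUP_mult_left_ennreal)
  qed
  finally show ?case .
qed
lemma nd_shift: "normal_density 0 t (x - y) = normal_density y t x"
  unfolding normal_density_def by (simp add: power2_commute)

lemma nd_le: "normal_density m s x \<le> 1 / sqrt (2 * pi * s\<^sup>2)"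
proof -
  have "exp (-(x - m)\<^sup>2/ (2 * s\<^sup>2)) \<le> 1" by simp
  then show ?thesis unfolding normal_density_def
    by (intro mult_left_le) auto
qed

lemma sd_integrable:
  assumes "prob_space M" "sets M = sets borel"
  shows "integrable M (\<lambda>y. normal_density 0 t (x - y))"
proof -
  interpret prob_space M by fact
  have m: "(\<lambda>y. normal_density 0 t (x - y)) \<in> borel_measurable M"
    by (rule meas_transfer[OF assms(2)]) measurable
  show ?thesis
    by (rule integrable_const_bound[where B="1 / sqrt (2 * pi * t\<^sup>2)"]) (use m nd_le in auto)
qed

lemma sd_nn:
  assumes "prob_space M" "sets M = sets borel"
  shows "ennreal (smoothed_density M t x) = (\<integral>\<^sup>+ y. ennreal (normal_density 0 t (x - y)) \<partial>M)"
  unfolding smoothed_density_def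
  by (rule nn_integral_eq_integral[symmetric]) (use sd_integrable[OF assms] in auto)

lemma sd_nonneg: "smoothed_density M t x \<ge> 0"
  unfolding smoothed_density_def by (intro integral_nonneg_AE) auto

lemma sd_mixture:
  assumes P: "\<And>j. j < k \<Longrightarrow> prob_space (\<mu> j)"
    and S: "\<And>j. j < k \<Longrightarrow> sets (\<mu> j) = sets borel"
    and a: "\<And>j. j < k \<Longrightarrow> \<alpha> j \<ge> 0"
  shows "smoothed_density (mixture k \<alpha> \<mu>) t x = (\<Sum>j<k. \<alpha> j * smoothed_density (\<mu> j) t x)"
proof -
  have m: "(\<lambda>y. normal_density 0 t (x - y)) \<in> borel_measurable (mixture k \<alpha> \<mu>)"
    by (rule meas_transfer[OF mixture_sets]) measurable
  have "smoothed_density (mixture k \<alpha> \<mu>) t x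
      = enn2real (\<integral>\<^sup>+ y. ennreal (normal_density 0 t (x - y)) \<partial>mixture k \<alpha> \<mu>)"
    unfolding smoothed_density_def by (rule integral_eq_nn_integral) (use m in auto)
  also have "(\<integral>\<^sup>+ y. ennreal (normal_density 0 t (x - y)) \<partial>mixture k \<alpha> \<mu>)
      = (\<Sum>j<k. ennreal (\<alpha> j) * (\<integral>\<^sup>+ y. ennreal (normal_density 0 t (x - y)) \<partial>\<mu> j))"
    by (rule mixture_nn_integral) (use S in auto)
  also have "\<dots> = (\<Sum>j<k. ennreal (\<alpha> j) * ennreal (smoothed_density (\<mu> j) t x))"
    using sd_nn P S by (intro sum.cong refl) auto
  also have "\<dots> = ennreal (\<Sum>j<k. \<alpha> j * smoothed_density (\<mu> j) t x)"
    using a sd_nonneg by (subst sum_ennreal[symmetric]) (auto simp: ennreal_mult intro!: sum.cong)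
  also have "enn2real \<dots> = (\<Sum>j<k. \<alpha> j * smoothed_density (\<mu> j) t x)"
    using a sd_nonneg by (intro enn2real_ennreal sum_nonneg) auto
  finally show ?thesis .
qed

lemma sd_measurable:
  assumes "prob_space M" "sets M = sets borel"
  shows "smoothed_density M t \<in> borel_measurable borel"
proof -
  interpret prob_space M by fact
  have e: "smoothed_density M t = (\<lambda>x. enn2real (\<integral>\<^sup>+ y. ennreal (normal_density 0 t (x - y)) \<partial>M))"
    using sd_nn[OF assms] by (metis enn2real_ennreal sd_nonneg)
  have f0: "(\<lambda>(x, y). ennreal (normal_density 0 t (x - y))) \<in> borel_measurable (borel \<Otimes>\<^sub>M borel)"
    by measurable
  have "(\<lambda>(x, y). ennreal (normal_density 0 t (x - y))) \<in> borel_measurable (borel \<Otimes>\<^sub>M M)"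
  proof -
    have S: "sets (borel \<Otimes>\<^sub>M M) = sets (borel \<Otimes>\<^sub>M borel)"
      by (rule sets_pair_measure_cong) (simp_all add: assms(2))
    show ?thesis by (subst measurable_cong_sets[OF S refl]) (rule f0)
  qed
  then show ?thesis unfolding e by measurable
qed

lemma sd_total:
  assumes "prob_space M" "sets M = sets borel" "t > 0"
  shows "(\<integral>\<^sup>+ x. ennreal (smoothed_density M t x) \<partial>lborel) = 1"
proof -
  interpret prob_space M by fact
  interpret pair_sigma_finite lborel M by unfold_locales
  have f: "(\<lambda>(x, y). ennreal (normal_density 0 t (x - y))) \<in> borel_measurable (borel \<Otimes>\<^sub>M borel)"
    by measurable
  have f1: "(\<lambda>(x, y). ennreal (normal_density 0 t (x - y))) \<in> borel_measurable (lborel \<Otimes>\<^sub>M M)"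
  proof -
    have S: "sets (lborel \<Otimes>\<^sub>M M) = sets (borel \<Otimes>\<^sub>M borel)"
      by (rule sets_pair_measure_cong) (simp_all add: assms(2))
    show ?thesis by (subst measurable_cong_sets[OF S refl]) (rule f)
  qed
  have "(\<integral>\<^sup>+ x. ennreal (smoothed_density M t x) \<partial>lborel)
      = (\<integral>\<^sup>+ x. (\<integral>\<^sup>+ y. ennreal (normal_density 0 t (x - y)) \<partial>M) \<partial>lborel)"
    using sd_nn[OF assms(1,2)] by simp
  also have "\<dots> = integral\<^sup>N (lborel \<Otimes>\<^sub>M M) (\<lambda>(x, y). ennreal (normal_density 0 t (x - y)))"
    using sigma_finite_measure.nn_integral_fst[OF prob_space_imp_sigma_finite[OF assms(1)] f1] by simp
  also have "\<dots> = (\<integral>\<^sup>+ y. (\<integral>\<^sup>+ x. ennreal (normal_density 0 t (x - y)) \<partial>lborel) \<partial>M)"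
    using nn_integral_snd[OF f1] by simp
  also have "\<dots> = (\<integral>\<^sup>+ y. 1 \<partial>M)"
  proof (intro nn_integral_cong)
    fix y
    have "(\<integral>\<^sup>+ x. ennreal (normal_density 0 t (x - y)) \<partial>lborel) = (\<integral>\<^sup>+ x. ennreal (normal_density y t x) \<partial>lborel)"
      by (simp add: nd_shift)
    also have "\<dots> = ennreal (\<integral>x. normal_density y t x \<partial>lborel)"
      using assms(3) by (intro nn_integral_eq_integral) auto
    also have "\<dots> = 1" using assms(3) by simp
    finally show "(\<integral>\<^sup>+ x. ennreal (normal_density 0 t (x - y)) \<partial>lborel) = 1" .
  qed
  also have "\<dots> = 1" by (simp add: emeasure_space_1)
  finally show ?thesis .
qed
lemma inv_abs_ln_0: "((\<lambda>t::real. 1 / \<bar>ln t\<bar>) \<longlongrightarrow> 0) (at_right 0)"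
proof -
  have "filterlim (\<lambda>t::real. - ln t) at_top (at_right 0)"
    by (rule filterlim_uminus_at_top[THEN iffD2]) (simp add: ln_at_0)
  then have *: "((\<lambda>t::real. inverse (- ln t)) \<longlongrightarrow> 0) (at_right 0)"
    by (rule tendsto_inverse_0_at_top)
  have "eventually (\<lambda>t::real. t < 1) (at_right 0)"
    using order_tendstoD(2)[OF tendsto_ident_at[of "0::real" "{0<..}"], of "1::real"] by simp
  moreover have "eventually (\<lambda>t::real. 0 < t) (at_right 0)" by (rule eventually_at_right_less)
  ultimately have "eventually (\<lambda>t::real. inverse (- ln t) = 1 / \<bar>ln t\<bar>) (at_right 0)"
  proof eventually_elim
    case (elim t) then have "ln t < 0" by simp
    then show ?case by (simp add: field_simps)
  qed
  then show ?thesis by (rule Lim_transform_eventually[OF *])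
qed

lemma eventually_01: "eventually (\<lambda>t::real. 0 < t \<and> t < 1) (at_right 0)"
proof -
  have "eventually (\<lambda>t::real. t < 1) (at_right 0)"
    using order_tendstoD(2)[OF tendsto_ident_at[of "0::real" "{0<..}"], of "1::real"] by simp
  moreover have "eventually (\<lambda>t::real. 0 < t) (at_right 0)" by (rule eventually_at_right_less)
  ultimately show ?thesis by eventually_elim auto
qed

lemma ratio_finite_H:
  assumes "0 < t" "t < 1" "\<bar>entropyH f * ereal (1 / \<bar>ln t\<bar>)\<bar> \<noteq> \<infinity>"
  shows "\<bar>entropyH f\<bar> \<noteq> \<infinity>"
proof -
  have c: "1 / \<bar>ln t\<bar> > 0" using assms by simp
  show ?thesis
  proof
    assume "\<bar>entropyH f\<bar> = \<infinity>"
    then have "entropyH f = \<infinity> \<or> entropyH f = -\<infinity>" by auto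
    then show False using assms(3) c by auto
  qed
qed
lemma prob_space_mixture:
  assumes P: "\<And>j. j < k \<Longrightarrow> prob_space (\<mu> j)"
    and S: "\<And>j. j < k \<Longrightarrow> sets (\<mu> j) = sets borel"
    and a: "\<And>j. j < k \<Longrightarrow> \<alpha> j \<ge> 0"
    and s: "(\<Sum>j<k. \<alpha> j) = 1"
  shows "prob_space (mixture k \<alpha> \<mu>)"
proof (rule prob_spaceI)
  have "emeasure (mixture k \<alpha> \<mu>) UNIV = (\<Sum>j<k. ennreal (\<alpha> j) * emeasure (\<mu> j) UNIV)"
    by (rule mixture_emeasure) (use S in auto)
  also have "\<dots> = (\<Sum>j<k. ennreal (\<alpha> j))"
  proof (intro sum.cong refl)
    fix j assume j: "j \<in> {..<k}"
    then have "space (\<mu> j) = UNIV" using S sets_eq_imp_space_eq[of "\<mu> j" borel] by auto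
    then have "emeasure (\<mu> j) UNIV = 1" using P[of j] j prob_space.emeasure_space_1 by fastforce
    then show "ennreal (\<alpha> j) * emeasure (\<mu> j) UNIV = ennreal (\<alpha> j)" by simp
  qed
  also have "\<dots> = ennreal (\<Sum>j<k. \<alpha> j)" using a by (subst sum_ennreal) auto
  finally show "emeasure (mixture k \<alpha> \<mu>) (space (mixture k \<alpha> \<mu>)) = 1"
    using s by (simp add: mixture_space)
qed

lemma mix_bounds:
  fixes k :: nat and \<mu> :: "nat \<Rightarrow> real measure" and \<alpha> :: "nat \<Rightarrow> real"
  assumes P: "\<And>j. j < k \<Longrightarrow> prob_space (\<mu> j)"
    and S: "\<And>j. j < k \<Longrightarrow> sets (\<mu> j) = sets borel"
    and a: "\<And>j. j < k \<Longrightarrow> \<alpha> j \<ge> 0"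
    and s: "(\<Sum>j<k. \<alpha> j) = 1"
    and t: "t > 0"
    and fin: "\<And>j. j < k \<Longrightarrow> \<bar>entropyH (smoothed_density (\<mu> j) t)\<bar> \<noteq> \<infinity>"
  defines "pm \<equiv> smoothed_density (mixture k \<alpha> \<mu>) t"
  defines "h \<equiv> (\<lambda>j. \<integral>x. smoothed_density (\<mu> j) t x * ln (smoothed_density (\<mu> j) t x) \<partial>lborel)"
  shows "entropyH pm = ereal (\<integral>x. pm x * ln (pm x) \<partial>lborel)"
    "(\<Sum>j<k. \<alpha> j * h j) - real k \<le> (\<integral>x. pm x * ln (pm x) \<partial>lborel)"
    "(\<integral>x. pm x * ln (pm x) \<partial>lborel) \<le> (\<Sum>j<k. \<alpha> j * h j)"
proof -
  define p where "p j = smoothed_density (\<mu> j) t" for j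
  have pm: "pm x = (\<Sum>j<k. \<alpha> j * p j x)" for x
    unfolding pm_def p_def by (rule sd_mixture[OF P S a])
  have pmeas[measurable]: "p j \<in> borel_measurable borel" if "j < k" for j
    unfolding p_def using sd_measurable P S that by blast
  have pnn: "p j x \<ge> 0" for j x unfolding p_def by (rule sd_nonneg)
  have pint: "integrable lborel (p j)" and pint1: "(\<integral>x. p j x \<partial>lborel) = 1" if "j < k" for j
  proof -
    have nn: "(\<integral>\<^sup>+ x. ennreal (p j x) \<partial>lborel) = 1"
      unfolding p_def using sd_total P S t that by blast
    show "integrable lborel (p j)"
      by (rule integrableI_nonneg) (use nn pnn that in auto)
    have "(\<integral>x. p j x \<partial>lborel) = enn2real (\<integral>\<^sup>+ x. ennreal (p j x) \<partial>lborel)"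
      by (rule integral_eq_nn_integral) (use pnn that in auto)
    then show "(\<integral>x. p j x \<partial>lborel) = 1" using nn by simp
  qed
  have phi_int: "integrable lborel (\<lambda>x. p j x * ln (p j x))" if "j < k" for j
    unfolding p_def using that by (intro entropyH_fin) (use fin S P sd_measurable in auto)
  have h: "h j = (\<integral>x. p j x * ln (p j x) \<partial>lborel)" for j unfolding h_def p_def by simp
  define U where "U x = (\<Sum>j<k. \<alpha> j * (p j x * ln (p j x)))" for x
  define Lo where "Lo x = U x - (\<Sum>j<k. p j x)" for x
  have Ui: "integrable lborel U" unfolding U_def
    using phi_int by (intro Bochner_Integration.integrable_sum integrable_mult_right) auto
  have Si: "integrable lborel (\<lambda>x. \<Sum>j<k. p j x)"
    using pint by (intro Bochner_Integration.integrable_sum) auto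
  have Li: "integrable lborel Lo" unfolding Lo_def using Ui Si by (rule Bochner_Integration.integrable_diff)
  have up: "pm x * ln (pm x) \<le> U x" for x
    unfolding pm U_def by (rule pw_upper) (use a pnn s in auto)
  have lo: "Lo x \<le> pm x * ln (pm x)" for x
    unfolding pm Lo_def U_def by (rule pw_lower) (use a pnn in auto)
  have pmm[measurable]: "pm \<in> borel_measurable borel"
    unfolding pm_def by (rule sd_measurable) (use P S a s in \<open>auto simp: mixture_sets intro: prob_space_mixture\<close>)
  have gi: "integrable lborel (\<lambda>x. pm x * ln (pm x))"
  proof (rule Bochner_Integration.integrable_bound[where f="\<lambda>x. \<bar>U x\<bar> + \<bar>Lo x\<bar>"])
    show "integrable lborel (\<lambda>x. \<bar>U x\<bar> + \<bar>Lo x\<bar>)" using Ui Li by auto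
    show "(\<lambda>x. pm x * ln (pm x)) \<in> borel_measurable lborel" by measurable
    show "AE x in lborel. norm (pm x * ln (pm x)) \<le> norm (\<bar>U x\<bar> + \<bar>Lo x\<bar>)"
    proof (rule AE_I2)
      fix x
      have "pm x * ln (pm x) \<le> U x" "Lo x \<le> pm x * ln (pm x)" using up lo by auto
      then show "norm (pm x * ln (pm x)) \<le> norm (\<bar>U x\<bar> + \<bar>Lo x\<bar>)" by auto
    qed
  qed
  show "entropyH pm = ereal (\<integral>x. pm x * ln (pm x) \<partial>lborel)"
    by (rule entropyH_eq) (use gi in auto)
  have "(\<integral>x. U x \<partial>lborel) = (\<Sum>j<k. \<alpha> j * h j)"
    unfolding U_def h using phi_int by (subst Bochner_Integration.integral_sum) auto
  moreover have "(\<integral>x. Lo x \<partial>lborel) = (\<Sum>j<k. \<alpha> j * h j) - real k"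
  proof -
    have "(\<integral>x. Lo x \<partial>lborel) = (\<integral>x. U x \<partial>lborel) - (\<integral>x. (\<Sum>j<k. p j x) \<partial>lborel)"
      unfolding Lo_def using Ui Si by (rule Bochner_Integration.integral_diff)
    also have "(\<integral>x. (\<Sum>j<k. p j x) \<partial>lborel) = (\<Sum>j<k. (\<integral>x. p j x \<partial>lborel))"
      using pint by (subst Bochner_Integration.integral_sum) auto
    also have "\<dots> = real k" using pint1 by simp
    finally show ?thesis using \<open>(\<integral>x. U x \<partial>lborel) = (\<Sum>j<k. \<alpha> j * h j)\<close> by simp
  qed
  moreover have "(\<integral>x. Lo x \<partial>lborel) \<le> (\<integral>x. pm x * ln (pm x) \<partial>lborel)"
    using Li gi lo by (intro integral_mono) auto
  moreover have "(\<integral>x. pm x * ln (pm x) \<partial>lborel) \<le> (\<integral>x. U x \<partial>lborel)"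
    using Ui gi up by (intro integral_mono) auto
  ultimately show "(\<Sum>j<k. \<alpha> j * h j) - real k \<le> (\<integral>x. pm x * ln (pm x) \<partial>lborel)"
    "(\<integral>x. pm x * ln (pm x) \<partial>lborel) \<le> (\<Sum>j<k. \<alpha> j * h j)" by auto
qed
theorem corollary2p3:
  fixes k :: nat and \<mu> :: "nat \<Rightarrow> real measure" and \<alpha> :: "nat \<Rightarrow> real"
  assumes "\<And>j. j < k \<Longrightarrow> prob_space (\<mu> j)"
    and "\<And>j. j < k \<Longrightarrow> sets (\<mu> j) = sets borel"
    and "\<And>j. j < k \<Longrightarrow> \<exists>L::real. (entropy_ratio (\<mu> j) \<longlongrightarrow> ereal L) (at_right 0)"
    and "\<And>j. j < k \<Longrightarrow> \<alpha> j \<ge> 0"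
    and "(\<Sum>j<k. \<alpha> j) = 1"
  shows "delta_c (mixture k \<alpha> \<mu>) = (\<Sum>j<k. ereal (\<alpha> j) * delta_c (\<mu> j))"
proof -
  note P = assms(1) and S = assms(2) and a = assms(4) and s = assms(5)
  have "\<forall>j. \<exists>L::real. j < k \<longrightarrow> (entropy_ratio (\<mu> j) \<longlongrightarrow> ereal L) (at_right 0)"
    using assms(3) by blast
  then obtain L :: "nat \<Rightarrow> real" where L: "\<And>j. j < k \<Longrightarrow> (entropy_ratio (\<mu> j) \<longlongrightarrow> ereal (L j)) (at_right 0)"
    by metis
  define h where "h j t = (\<integral>x. smoothed_density (\<mu> j) t x * ln (smoothed_density (\<mu> j) t x) \<partial>lborel)" for j t
  have evj: "eventually (\<lambda>t. 0 < t \<and> t < 1 \<and> \<bar>entropyH (smoothed_density (\<mu> j) t)\<bar> \<noteq> \<infinity>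
      \<and> entropy_ratio (\<mu> j) t = ereal (h j t / \<bar>ln t\<bar>)) (at_right 0)" if j: "j < k" for j
  proof -
    have e1: "eventually (\<lambda>t. ereal (L j - 1) < entropy_ratio (\<mu> j) t) (at_right 0)"
      by (rule order_tendstoD(1)[OF L[OF j]]) simp
    have e2: "eventually (\<lambda>t. entropy_ratio (\<mu> j) t < ereal (L j + 1)) (at_right 0)"
      by (rule order_tendstoD(2)[OF L[OF j]]) simp
    from e1 e2 eventually_01 show ?thesis
    proof eventually_elim
      case (elim t)
      then have fr: "\<bar>entropy_ratio (\<mu> j) t\<bar> \<noteq> \<infinity>" by auto
      have fH: "\<bar>entropyH (smoothed_density (\<mu> j) t)\<bar> \<noteq> \<infinity>"
        using ratio_finite_H[of t "smoothed_density (\<mu> j) t"] elim fr unfolding entropy_ratio_def by auto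
      have m: "smoothed_density (\<mu> j) t \<in> borel_measurable lborel"
        using sd_measurable[OF P[OF j] S[OF j]] by simp
      have "entropyH (smoothed_density (\<mu> j) t) = ereal (h j t)"
        unfolding h_def by (rule entropyH_eq[OF m entropyH_fin[OF m fH]])
      then have "entropy_ratio (\<mu> j) t = ereal (h j t / \<bar>ln t\<bar>)"
        unfolding entropy_ratio_def by simp
      then show ?case using elim fH by auto
    qed
  qed
  have hlim: "((\<lambda>t. h j t / \<bar>ln t\<bar>) \<longlongrightarrow> L j) (at_right 0)" if j: "j < k" for j
  proof -
    have "eventually (\<lambda>t. entropy_ratio (\<mu> j) t = ereal (h j t / \<bar>ln t\<bar>)) (at_right 0)"
      using evj[OF j] by eventually_elim auto
    then have "((\<lambda>t. ereal (h j t / \<bar>ln t\<bar>)) \<longlongrightarrow> ereal (L j)) (at_right 0)"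
      by (rule Lim_transform_eventually[OF L[OF j]])
    then show ?thesis by simp
  qed
  have ev: "eventually (\<lambda>t. \<forall>j\<in>{..<k}. 0 < t \<and> t < 1 \<and> \<bar>entropyH (smoothed_density (\<mu> j) t)\<bar> \<noteq> \<infinity>
      \<and> entropy_ratio (\<mu> j) t = ereal (h j t / \<bar>ln t\<bar>)) (at_right 0)"
    using evj by (intro eventually_ball_finite) auto
  define hm where "hm t = (\<integral>x. smoothed_density (mixture k \<alpha> \<mu>) t x * ln (smoothed_density (mixture k \<alpha> \<mu>) t x) \<partial>lborel)" for t
  have ev2: "eventually (\<lambda>t. entropy_ratio (mixture k \<alpha> \<mu>) t = ereal (hm t / \<bar>ln t\<bar>)
      \<and> (\<Sum>j<k. \<alpha> j * (h j t / \<bar>ln t\<bar>)) - real k * (1 / \<bar>ln t\<bar>) \<le> hm t / \<bar>ln t\<bar>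
      \<and> hm t / \<bar>ln t\<bar> \<le> (\<Sum>j<k. \<alpha> j * (h j t / \<bar>ln t\<bar>))) (at_right 0)"
    using ev eventually_01
  proof eventually_elim
    case (elim t)
    then have t: "0 < t" "t < 1" by auto
    have fin: "\<And>j. j < k \<Longrightarrow> \<bar>entropyH (smoothed_density (\<mu> j) t)\<bar> \<noteq> \<infinity>" using elim(1) by auto
    note B = mix_bounds[OF P S a s t(1) fin]
    have c: "\<bar>ln t\<bar> > 0" using t by simp
    have "entropy_ratio (mixture k \<alpha> \<mu>) t = ereal (hm t / \<bar>ln t\<bar>)"
      unfolding entropy_ratio_def using B(1) unfolding hm_def by simp
    moreover have "(\<Sum>j<k. \<alpha> j * h j t) - real k \<le> hm t" "hm t \<le> (\<Sum>j<k. \<alpha> j * h j t)"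
      using B(2,3) unfolding hm_def h_def by auto
    then have "((\<Sum>j<k. \<alpha> j * h j t) - real k) / \<bar>ln t\<bar> \<le> hm t / \<bar>ln t\<bar>"
      "hm t / \<bar>ln t\<bar> \<le> (\<Sum>j<k. \<alpha> j * h j t) / \<bar>ln t\<bar>"
      using c by (auto intro: divide_right_mono)
    moreover have "((\<Sum>j<k. \<alpha> j * h j t) - real k) / \<bar>ln t\<bar> = (\<Sum>j<k. \<alpha> j * (h j t / \<bar>ln t\<bar>)) - real k * (1 / \<bar>ln t\<bar>)"
      "(\<Sum>j<k. \<alpha> j * h j t) / \<bar>ln t\<bar> = (\<Sum>j<k. \<alpha> j * (h j t / \<bar>ln t\<bar>))"
      by (simp_all add: diff_divide_distrib sum_divide_distrib)
    ultimately show ?case by simp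
  qed
  define SL where "SL = (\<Sum>j<k. \<alpha> j * L j)"
  have up_lim: "((\<lambda>t. \<Sum>j<k. \<alpha> j * (h j t / \<bar>ln t\<bar>)) \<longlongrightarrow> SL) (at_right 0)"
    unfolding SL_def using hlim by (intro tendsto_sum tendsto_mult tendsto_const) auto
  have lo_lim: "((\<lambda>t. (\<Sum>j<k. \<alpha> j * (h j t / \<bar>ln t\<bar>)) - real k * (1 / \<bar>ln t\<bar>)) \<longlongrightarrow> SL - real k * 0) (at_right 0)"
    by (intro tendsto_diff up_lim tendsto_mult tendsto_const inv_abs_ln_0)
  have "((\<lambda>t. hm t / \<bar>ln t\<bar>) \<longlongrightarrow> SL) (at_right 0)"
  proof (rule tendsto_sandwich)
    show "eventually (\<lambda>t. (\<Sum>j<k. \<alpha> j * (h j t / \<bar>ln t\<bar>)) - real k * (1 / \<bar>ln t\<bar>) \<le> hm t / \<bar>ln t\<bar>) (at_right 0)"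
      using ev2 by eventually_elim auto
    show "eventually (\<lambda>t. hm t / \<bar>ln t\<bar> \<le> (\<Sum>j<k. \<alpha> j * (h j t / \<bar>ln t\<bar>))) (at_right 0)"
      using ev2 by eventually_elim auto
  qed (use lo_lim up_lim in auto)
  then have "((\<lambda>t. ereal (hm t / \<bar>ln t\<bar>)) \<longlongrightarrow> ereal SL) (at_right 0)" by simp
  moreover have "eventually (\<lambda>t. ereal (hm t / \<bar>ln t\<bar>) = entropy_ratio (mixture k \<alpha> \<mu>) t) (at_right 0)"
    using ev2 by eventually_elim auto
  ultimately have "(entropy_ratio (mixture k \<alpha> \<mu>) \<longlongrightarrow> ereal SL) (at_right 0)"
    by (rule Lim_transform_eventually)
  then have dm: "delta_c (mixture k \<alpha> \<mu>) = 1 - ereal SL"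
    unfolding delta_c_def by (subst lim_imp_Liminf) auto
  have dj: "delta_c (\<mu> j) = ereal (1 - L j)" if "j < k" for j
    unfolding delta_c_def using L[OF that] by (subst lim_imp_Liminf) (auto simp: one_ereal_def)
  have "(\<Sum>j<k. ereal (\<alpha> j) * delta_c (\<mu> j)) = (\<Sum>j<k. ereal (\<alpha> j * (1 - L j)))"
    using dj by (intro sum.cong refl) auto
  also have "\<dots> = ereal (\<Sum>j<k. \<alpha> j * (1 - L j))" by (rule sum_ereal)
  also have "(\<Sum>j<k. \<alpha> j * (1 - L j)) = 1 - SL"
    unfolding SL_def using s by (simp add: right_diff_distrib sum_subtractf)
  finally show ?thesis using dm by (simp add: one_ereal_def)
qed
end
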